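(* Let $\alpha\in(0,1]$ and $a,b\in\mathbb{R}$ with $0\le a<b$. Let $g:[a,b]\to[0,1]$ be $\alpha$-fractional integrable on $[a,b]$, and define $$ \ell:=\frac{\alpha(b-a)}{b^\alpha-a^\alpha}\int_a^b g(t)\,d_\alpha t. $$ Then $\ell\in[0,b-a]$ and $$ \int_{b-\ell}^b 1\,d_\alpha t\le\int_a^b g(t)\,d_\alpha t\le\int_a^{a+\ell}1\,d_\alpha t. $$
   Context: For $\alpha\in(0,1]$ and $0\le a<b$, $\int_a^b f(t)\,d_\alpha t:=\int_a^b f(t)\,t^{\alpha-1}\,dt$, and $f$ is called $\alpha$-fractional integrable on $[a,b]$ if this integral exists and is finite. *)

theory Defs
  imports "HOL-Analysis.Analysis"
begin

text \<open>alpha-fractional integral: integral over [a,b] of f(t) t^(alpha-1) dt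
  (Henstock-Kurzweil integral; for the nonnegative integrands here this coincides
  with the Lebesgue integral, including the improper case a = 0).\<close>

definition frac_integral :: "real \<Rightarrow> (real \<Rightarrow> real) \<Rightarrow> real \<Rightarrow> real \<Rightarrow> real" where
  "frac_integral \<alpha> f a b = integral {a..b} (\<lambda>t. f t * t powr (\<alpha> - 1))"

definition frac_integrable :: "real \<Rightarrow> (real \<Rightarrow> real) \<Rightarrow> real \<Rightarrow> real \<Rightarrow> bool" where
  "frac_integrable \<alpha> f a b \<longleftrightarrow> (\<lambda>t. f t * t powr (\<alpha> - 1)) integrable_on {a..b}"

end

theory Submission
  imports Defs
begin

lemma pint:
  assumes "0 < \<alpha>" "0 \<le> x" "x \<le> y"
  shows "((\<lambda>t::real. t powr (\<alpha> - 1)) has_integral (y powr \<alpha> - x powr \<alpha>) / \<alpha>) {x..y}"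
proof -
  have H: "((\<lambda>t::real. t powr (\<alpha> - 1)) has_integral c powr \<alpha> / \<alpha>) {0..c}" if "c \<ge> 0" for c
    using has_integral_powr_from_0[of "\<alpha> - 1" c] that assms by simp
  have iy: "(\<lambda>t::real. t powr (\<alpha> - 1)) integrable_on {0..y}"
    using has_integral_integrable[OF H[of y]] assms by linarith
  have "integral {0..x} (\<lambda>t::real. t powr (\<alpha> - 1)) + integral {x..y} (\<lambda>t. t powr (\<alpha> - 1))
      = integral {0..y} (\<lambda>t. t powr (\<alpha> - 1))"
    using Henstock_Kurzweil_Integration.integral_combine[OF assms(2,3) iy] .
  moreover have "integral {0..x} (\<lambda>t::real. t powr (\<alpha> - 1)) = x powr \<alpha> / \<alpha>"
    using H[of x] assms by (simp add: integral_unique)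
  moreover have "integral {0..y} (\<lambda>t::real. t powr (\<alpha> - 1)) = y powr \<alpha> / \<alpha>"
    using H[of y] assms by (simp add: integral_unique)
  ultimately have "integral {x..y} (\<lambda>t::real. t powr (\<alpha> - 1)) = (y powr \<alpha> - x powr \<alpha>) / \<alpha>"
    by (simp add: diff_divide_distrib)
  moreover have "(\<lambda>t::real. t powr (\<alpha> - 1)) integrable_on {x..y}"
    by (rule integrable_subinterval_real[OF iy]) (use assms in auto)
  ultimately show ?thesis by (metis integrable_integral)
qed

lemma fi1:
  assumes "0 < \<alpha>" "0 \<le> x" "x \<le> y"
  shows "frac_integral \<alpha> (\<lambda>t. 1) x y = (y powr \<alpha> - x powr \<alpha>) / \<alpha>"
  using pint[OF assms] unfolding frac_integral_def by (simp add: integral_unique)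

lemma pow_ge_lin:
  fixes \<alpha> s b :: real
  assumes "0 < \<alpha>" "\<alpha> \<le> 1" "0 \<le> s" "s \<le> 1" "0 \<le> b"
  shows "(s * b) powr \<alpha> \<ge> s * b powr \<alpha>"
proof -
  have "s \<le> s powr \<alpha>"
  proof (cases "s = 0")
    case False
    then have "s powr 1 \<le> s powr \<alpha>"
      using assms by (intro powr_mono'[where a=\<alpha> and b=1 and x=s]) auto
    then show ?thesis using False assms by simp
  qed simp
  then have "s * b powr \<alpha> \<le> s powr \<alpha> * b powr \<alpha>"
    by (intro mult_right_mono) auto
  also have "\<dots> = (s * b) powr \<alpha>" using assms by (simp add: powr_mult)
  finally show ?thesis .
qed

lemma conc:
  assumes "0 < \<alpha>" "\<alpha> \<le> 1" "0 < a" "a < b"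
  shows "concave_on {a..b} (\<lambda>x::real. x powr \<alpha>)"
proof (rule f''_le0_imp_concave[where f' = "\<lambda>x. \<alpha> * x powr (\<alpha> - 1)"
      and f'' = "\<lambda>x. \<alpha> * ((\<alpha> - 1) * x powr (\<alpha> - 1 - 1))"])
  show "convex {a..b}" by simp
  fix x assume x: "x \<in> {a..b}"
  then have xp: "x > 0" using assms by auto
  show "DERIV (\<lambda>x. x powr \<alpha>) x :> \<alpha> * x powr (\<alpha> - 1)"
    using xp by (auto intro!: derivative_eq_intros)
  show "DERIV (\<lambda>x. \<alpha> * x powr (\<alpha> - 1)) x :> \<alpha> * ((\<alpha> - 1) * x powr (\<alpha> - 1 - 1))"
    using xp by (auto intro!: derivative_eq_intros)
  show "\<alpha> * ((\<alpha> - 1) * x powr (\<alpha> - 1 - 1)) \<le> 0"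
  proof -
    have h: "(\<alpha> - 1) * x powr (\<alpha> - 1 - 1) \<le> 0"
      using assms xp by (intro mult_nonpos_nonneg) auto
    then show ?thesis using h assms by (simp add: mult_nonneg_nonpos)
  qed
qed

theorem mainTheorem4:
  fixes \<alpha> a b l :: real and g :: "real \<Rightarrow> real"
  assumes "0 < \<alpha>" "\<alpha> \<le> 1"
    and "0 \<le> a" "a < b"
    and "\<forall>t\<in>{a..b}. 0 \<le> g t \<and> g t \<le> 1"
    and "frac_integrable \<alpha> g a b"
  defines "l \<equiv> \<alpha> * (b - a) / (b powr \<alpha> - a powr \<alpha>) * frac_integral \<alpha> g a b"
  shows "0 \<le> l \<and> l \<le> b - a
    \<and> frac_integral \<alpha> (\<lambda>t. 1) (b - l) b \<le> frac_integral \<alpha> g a b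
    \<and> frac_integral \<alpha> g a b \<le> frac_integral \<alpha> (\<lambda>t. 1) a (a + l)"
proof -
  define I where "I = frac_integral \<alpha> g a b"
  define D where "D = b powr \<alpha> - a powr \<alpha>"
  have Dp: "D > 0" unfolding D_def using assms powr_less_mono2[of \<alpha> a b] by simp
  have P: "((\<lambda>t::real. t powr (\<alpha> - 1)) has_integral D / \<alpha>) {a..b}"
    unfolding D_def using pint assms by auto
  have gi: "(\<lambda>t. g t * t powr (\<alpha> - 1)) integrable_on {a..b}"
    using assms(6) unfolding frac_integrable_def .
  have I0: "I \<ge> 0" unfolding I_def frac_integral_def
    using assms(5) by (intro integral_nonneg[OF gi]) auto
  have IM: "I \<le> D / \<alpha>" unfolding I_def frac_integral_def
    using assms(5) by (intro has_integral_le[OF integrable_integral[OF gi] P])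
      (auto intro: mult_left_le_one_le)
  have ldef: "l = (b - a) * (\<alpha> * I / D)" unfolding l_def I_def D_def by simp
  define s where "s = \<alpha> * I / D"
  have s0: "0 \<le> s" unfolding s_def using I0 Dp assms by auto
  have s1: "s \<le> 1" unfolding s_def using IM Dp assms by (simp add: field_simps)
  have ls: "l = (b - a) * s" using ldef s_def by simp
  have l0: "0 \<le> l" using ls s0 assms by simp
  have lb: "l \<le> b - a" using ls s1 assms
    by (metis diff_ge_0_iff_ge less_eq_real_def mult_left_le mult.commute)
  have aI: "\<alpha> * I = s * D" using Dp by (simp only: s_def) (simp add: field_simps)
  have up: "(a + l) powr \<alpha> - a powr \<alpha> \<ge> s * D \<and> b powr \<alpha> - (b - l) powr \<alpha> \<le> s * D"
  proof (cases "a = 0")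
    case True
    have "(s * b) powr \<alpha> \<ge> s * b powr \<alpha>" using pow_ge_lin[OF assms(1,2) s0 s1, of b] assms by auto
    moreover have "((1 - s) * b) powr \<alpha> \<ge> (1 - s) * b powr \<alpha>"
      using pow_ge_lin[OF assms(1,2), of "1 - s" b] s0 s1 assms by auto
    moreover have "b - l = (1 - s) * b" "a + l = s * b" using ldef s_def True
      by (auto simp: algebra_simps)
    ultimately show ?thesis using True D_def assms
      by (auto simp: algebra_simps)
  next
    case False
    then have ap: "a > 0" using assms by auto
    have c: "concave_on {a..b} (\<lambda>x::real. x powr \<alpha>)" using conc assms ap by auto
    have h1: "(a + l) powr \<alpha> \<ge> (b powr \<alpha> - a powr \<alpha>) / (b - a) * (a + l - a) + a powr \<alpha>"
      using concave_onD_Icc'[OF c, of "a + l"] l0 lb by auto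
    have h2: "(b - l) powr \<alpha> \<ge> (a powr \<alpha> - b powr \<alpha>) / (b - a) * (b - (b - l)) + b powr \<alpha>"
      using concave_onD_Icc''[OF c, of "b - l"] l0 lb by auto
    have h3: "(b powr \<alpha> - a powr \<alpha>) / (b - a) * l = s * D"
    proof -
      have "b - a \<noteq> 0" using assms(4) by simp
      then show ?thesis unfolding ls D_def[symmetric] by (simp add: field_simps)
    qed
    have h4: "(a powr \<alpha> - b powr \<alpha>) / (b - a) * (b - (b - l)) = - (s * D)"
    proof -
      have "(a powr \<alpha> - b powr \<alpha>) / (b - a) * (b - (b - l)) = - ((b powr \<alpha> - a powr \<alpha>) / (b - a) * l)"
        using assms(4) by (simp add: field_simps)
      then show ?thesis using h3 by simp
    qed
    show ?thesis using h1 h2 h3 h4 by simp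
  qed
  have e1: "frac_integral \<alpha> (\<lambda>t. 1) (b - l) b = (b powr \<alpha> - (b - l) powr \<alpha>) / \<alpha>"
    using fi1 assms l0 lb by auto
  have e2: "frac_integral \<alpha> (\<lambda>t. 1) a (a + l) = ((a + l) powr \<alpha> - a powr \<alpha>) / \<alpha>"
    using fi1 assms l0 lb by auto
  have "frac_integral \<alpha> (\<lambda>t. 1) (b - l) b \<le> I"
    unfolding e1 using up aI assms by (simp add: divide_le_eq mult.commute)
  moreover have "I \<le> frac_integral \<alpha> (\<lambda>t. 1) a (a + l)"
    unfolding e2 using up aI assms by (simp add: le_divide_eq mult.commute)
  ultimately show ?thesis using l0 lb I_def by auto
qed

end
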